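(* Let $(z_n)_{n\in\mathbb{N}}\subset\mathbb{C}$ and $(\lambda_n)_{n\in\mathbb{N}}\subset\mathbb{R}^+$ be sequences and let $x,c_1,c_2$ be positive reals. Let $T,T'\in[1,\infty)$ with $|T-T'|\le1$. Assume that for $t\ge1$, $$\sum_{\lambda_n\le t}|z_n|^2\ll t^{c_1}\qquad\text{and}\qquad\sum_{t<\lambda_n\le t+1}1\ll(\log t)^{c_2}.$$ Then $$\sum_{\lambda_n\le T'}\frac{z_nx^{\frac12+i\lambda_n}}{\frac12+i\lambda_n}=\sum_{\lambda_n\le T}\frac{z_nx^{\frac12+i\lambda_n}}{\frac12+i\lambda_n}+O\Big(x^{1/2}T^{(c_1-2)/2}(\log T)^{c_2/2}\Big).$$
   Context: $f\ll g$ means $|f|\le M|g|$ for some constant $M>0$. *)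

theory Defs
  imports "HOL-Analysis.Analysis"
begin

end

theory Submission
  imports Defs
begin

lemma key_bound:
  fixes z :: "nat \<Rightarrow> complex" and lam :: "nat \<Rightarrow> real" and c1 c2 M1 M2 x a b T :: real
  assumes c1_pos: "c1 > 0" and c2_pos: "c2 > 0"
    and fin: "\<And>t. finite {n. lam n \<le> t}"
    and M1: "\<forall>t\<ge>1. \<bar>\<Sum>n\<in>{n. lam n \<le> t}. (cmod (z n))\<^sup>2\<bar> \<le> M1 * \<bar>t powr c1\<bar>" and M1p: "M1 \<ge> 0"
    and M2: "\<forall>t\<ge>1. \<bar>real (card {n. t < lam n \<and> lam n \<le> t + 1})\<bar> \<le> M2 * \<bar>(ln t) powr c2\<bar>" and M2p: "M2 \<ge> 0"
    and x: "x > 0" and a1: "1 \<le> a" and ab: "a \<le> b" and ba: "b \<le> a + 1"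
    and aT: "a \<le> T" and Ta: "T \<le> 2 * a" and bT: "b \<le> 2 * T"
  shows "cmod ((\<Sum>n\<in>{n. lam n \<le> b}. z n * complex_of_real x powr (1/2 + \<i> * complex_of_real (lam n)) / (1/2 + \<i> * complex_of_real (lam n)))
         - (\<Sum>n\<in>{n. lam n \<le> a}. z n * complex_of_real x powr (1/2 + \<i> * complex_of_real (lam n)) / (1/2 + \<i> * complex_of_real (lam n))))
     \<le> (2 * sqrt M2 * sqrt (M1 * 2 powr c1)) * \<bar>x powr (1/2) * T powr ((c1 - 2) / 2) * (ln T) powr (c2 / 2)\<bar>"
proof -
  define f where "f n = z n * complex_of_real x powr (1/2 + \<i> * complex_of_real (lam n)) / (1/2 + \<i> * complex_of_real (lam n))" for n
  define S where "S = {n. a < lam n \<and> lam n \<le> b}"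
  have T1: "T \<ge> 1" using a1 aT by linarith
  have finS: "finite S" unfolding S_def by (rule finite_subset[OF _ fin[of b]]) auto
  have un: "{n. lam n \<le> b} = S \<union> {n. lam n \<le> a}" unfolding S_def using ab by auto
  have dis: "S \<inter> {n. lam n \<le> a} = {}" unfolding S_def by auto
  have eq: "(\<Sum>n\<in>{n. lam n \<le> b}. f n) - (\<Sum>n\<in>{n. lam n \<le> a}. f n) = (\<Sum>n\<in>S. f n)"
    unfolding un by (subst sum.union_disjoint[OF finS fin dis]) simp
  have nf: "norm (f n) \<le> cmod (z n) * (x powr (1/2) / a)" if "n \<in> S" for n
  proof -
    have la: "lam n > a" using that unfolding S_def by auto
    have "norm (complex_of_real x powr (1/2 + \<i> * complex_of_real (lam n))) = x powr (1/2)"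
      using x by (subst norm_powr_real_powr) auto
    moreover have "cmod (1/2 + \<i> * complex_of_real (lam n)) \<ge> lam n"
    proof -
      have "\<bar>Im (1/2 + \<i> * complex_of_real (lam n))\<bar> \<le> cmod (1/2 + \<i> * complex_of_real (lam n))" by (rule abs_Im_le_cmod)
      thus ?thesis by simp
    qed
    ultimately have "norm (f n) = cmod (z n) * x powr (1/2) / cmod (1/2 + \<i> * complex_of_real (lam n))"
      and "cmod (1/2 + \<i> * complex_of_real (lam n)) \<ge> a" using la
      by (auto simp: f_def norm_mult norm_divide)
    moreover have "cmod (z n) * x powr (1/2) / cmod (1/2 + \<i> * complex_of_real (lam n)) \<le> cmod (z n) * x powr (1/2) / a"
      apply (rule divide_left_mono) using calculation(2) a1 by (auto intro!: mult_pos_pos)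
    ultimately show ?thesis by simp
  qed
  have "norm (\<Sum>n\<in>S. f n) \<le> (\<Sum>n\<in>S. norm (f n))" by (rule norm_sum)
  also have "\<dots> \<le> (\<Sum>n\<in>S. cmod (z n) * (x powr (1/2) / a))" by (rule sum_mono) (rule nf)
  also have "\<dots> = (\<Sum>n\<in>S. cmod (z n)) * (x powr (1/2) / a)" by (rule sum_distrib_right[symmetric])
  finally have st1: "norm (\<Sum>n\<in>S. f n) \<le> (\<Sum>n\<in>S. cmod (z n)) * (x powr (1/2) / a)" .
  have cs: "(\<Sum>n\<in>S. cmod (z n)) \<le> sqrt ((\<Sum>n\<in>S. (cmod (z n))\<^sup>2) * real (card S))"
    using sum_squared_le_sum_of_squares[of "\<lambda>n. cmod (z n)" S] real_le_rsqrt by blast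
  have cardS: "real (card S) \<le> M2 * (ln T) powr c2"
  proof -
    have "S \<subseteq> {n. a < lam n \<and> lam n \<le> a + 1}" unfolding S_def using ba by auto
    moreover have "finite {n. a < lam n \<and> lam n \<le> a + 1}" by (rule finite_subset[OF _ fin[of "a+1"]]) auto
    ultimately have "card S \<le> card {n. a < lam n \<and> lam n \<le> a + 1}" by (rule card_mono[rotated])
    hence "real (card S) \<le> M2 * \<bar>(ln a) powr c2\<bar>" using M2 a1 by force
    also have "\<bar>(ln a) powr c2\<bar> = (ln a) powr c2" by simp
    also have "(ln a) powr c2 \<le> (ln T) powr c2"
      by (rule powr_mono2) (use c2_pos a1 aT in auto)
    finally show ?thesis using M2p by (simp add: mult_left_mono)
  qed
  have sumS: "(\<Sum>n\<in>S. (cmod (z n))\<^sup>2) \<le> M1 * 2 powr c1 * T powr c1"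
  proof -
    have "S \<subseteq> {n. lam n \<le> b}" unfolding S_def by auto
    hence "(\<Sum>n\<in>S. (cmod (z n))\<^sup>2) \<le> (\<Sum>n\<in>{n. lam n \<le> b}. (cmod (z n))\<^sup>2)"
      by (intro sum_mono2 fin) auto
    also have "\<dots> \<le> M1 * \<bar>b powr c1\<bar>" using M1[rule_format, of b] a1 ab abs_ge_self[of "\<Sum>n\<in>{n. lam n \<le> b}. (cmod (z n))\<^sup>2"] by linarith
    also have "\<bar>b powr c1\<bar> = b powr c1" by simp
    also have "b powr c1 \<le> (2 * T) powr c1" by (rule powr_mono2) (use c1_pos a1 ab bT in auto)
    also have "(2 * T) powr c1 = 2 powr c1 * T powr c1" using T1 by (simp add: powr_mult)
    finally show ?thesis using M1p by (simp add: mult_left_mono mult.assoc)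
  qed
  have "(\<Sum>n\<in>S. cmod (z n)) \<le> sqrt ((M1 * 2 powr c1 * T powr c1) * (M2 * (ln T) powr c2))"
    using cs apply (rule order_trans)
    apply (rule real_sqrt_le_mono)
    apply (rule mult_mono[OF sumS cardS]) using M1p by auto
  also have "\<dots> = sqrt (M1 * 2 powr c1) * sqrt M2 * (T powr (c1/2) * (ln T) powr (c2/2))"
  proof -
    have "sqrt (T powr c1) = T powr (c1/2)" using T1
      by (simp add: powr_half_sqrt[symmetric] powr_powr)
    moreover have "sqrt ((ln T) powr c2) = (ln T) powr (c2/2)" using T1
      by (simp add: powr_half_sqrt[symmetric] powr_powr)
    ultimately show ?thesis by (simp add: real_sqrt_mult mult_ac)
  qed
  finally have st2: "(\<Sum>n\<in>S. cmod (z n)) \<le> sqrt (M1 * 2 powr c1) * sqrt M2 * (T powr (c1/2) * (ln T) powr (c2/2))" .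
  have ia: "x powr (1/2) / a \<le> 2 * x powr (1/2) / T"
  proof -
    have "T * x powr (1/2) \<le> (2 * a) * x powr (1/2)" using Ta by (intro mult_right_mono) auto
    thus ?thesis using a1 T1 by (simp add: field_simps)
  qed
  have Tp: "T powr ((c1 - 2) / 2) = T powr (c1/2) / T"
    using T1 by (simp add: diff_divide_distrib powr_diff)
  have nn: "0 \<le> x powr (1/2) * T powr ((c1 - 2) / 2) * (ln T) powr (c2 / 2)" by simp
  have "norm (\<Sum>n\<in>S. f n) \<le> (sqrt (M1 * 2 powr c1) * sqrt M2 * (T powr (c1/2) * (ln T) powr (c2/2))) * (2 * x powr (1/2) / T)"
    using st1 apply (rule order_trans)
    apply (rule mult_mono[OF st2 ia]) using M1p M2p a1 by auto
  also have "\<dots> = (2 * sqrt M2 * sqrt (M1 * 2 powr c1)) * \<bar>x powr (1/2) * T powr ((c1 - 2) / 2) * (ln T) powr (c2 / 2)\<bar>"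
    using nn Tp T1 by (simp add: mult_ac)
  finally show ?thesis using eq unfolding f_def by simp
qed

theorem lemma4p4:
  fixes z :: "nat \<Rightarrow> complex" and lam :: "nat \<Rightarrow> real" and c1 c2 :: real
  assumes lam_pos: "\<And>n. lam n > 0"
    and c1_pos: "c1 > 0" and c2_pos: "c2 > 0"
    and fin: "\<And>t. finite {n. lam n \<le> t}"
    and H1: "\<exists>M. \<forall>t\<ge>1. \<bar>\<Sum>n\<in>{n. lam n \<le> t}. (cmod (z n))\<^sup>2\<bar> \<le> M * \<bar>t powr c1\<bar>"
    and H2: "\<exists>M. \<forall>t\<ge>1. \<bar>real (card {n. t < lam n \<and> lam n \<le> t + 1})\<bar> \<le> M * \<bar>(ln t) powr c2\<bar>"
  shows "\<exists>C. \<forall>x T T'. x > 0 \<longrightarrow> T \<ge> 1 \<longrightarrow> T' \<ge> 1 \<longrightarrow> \<bar>T - T'\<bar> \<le> 1 \<longrightarrow>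
     cmod ((\<Sum>n\<in>{n. lam n \<le> T'}. z n * complex_of_real x powr (1/2 + \<i> * complex_of_real (lam n)) / (1/2 + \<i> * complex_of_real (lam n)))
         - (\<Sum>n\<in>{n. lam n \<le> T}. z n * complex_of_real x powr (1/2 + \<i> * complex_of_real (lam n)) / (1/2 + \<i> * complex_of_real (lam n))))
     \<le> C * \<bar>x powr (1/2) * T powr ((c1 - 2) / 2) * (ln T) powr (c2 / 2)\<bar>"
proof -
  obtain M1 where M1: "\<forall>t\<ge>1. \<bar>\<Sum>n\<in>{n. lam n \<le> t}. (cmod (z n))\<^sup>2\<bar> \<le> M1 * \<bar>t powr c1\<bar>" using H1 by blast
  obtain M2 where M2: "\<forall>t\<ge>1. \<bar>real (card {n. t < lam n \<and> lam n \<le> t + 1})\<bar> \<le> M2 * \<bar>(ln t) powr c2\<bar>" using H2 by blast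
  have M1': "\<forall>t\<ge>1. \<bar>\<Sum>n\<in>{n. lam n \<le> t}. (cmod (z n))\<^sup>2\<bar> \<le> max M1 0 * \<bar>t powr c1\<bar>"
    using M1 by (meson abs_ge_zero max.cobounded1 mult_right_mono order_trans)
  have M2': "\<forall>t\<ge>1. \<bar>real (card {n. t < lam n \<and> lam n \<le> t + 1})\<bar> \<le> max M2 0 * \<bar>(ln t) powr c2\<bar>"
    using M2 by (meson abs_ge_zero max.cobounded1 mult_right_mono order_trans)
  note K = key_bound[OF c1_pos c2_pos fin M1' _ M2']
  show ?thesis
  proof (intro exI allI impI)
    fix x T T' :: real
    assume x: "x > 0" and T1: "T \<ge> 1" and T'1: "T' \<ge> 1" and d: "\<bar>T - T'\<bar> \<le> 1"
    show "cmod ((\<Sum>n\<in>{n. lam n \<le> T'}. z n * complex_of_real x powr (1/2 + \<i> * complex_of_real (lam n)) / (1/2 + \<i> * complex_of_real (lam n)))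
         - (\<Sum>n\<in>{n. lam n \<le> T}. z n * complex_of_real x powr (1/2 + \<i> * complex_of_real (lam n)) / (1/2 + \<i> * complex_of_real (lam n))))
     \<le> (2 * sqrt (max M2 0) * sqrt (max M1 0 * 2 powr c1)) * \<bar>x powr (1/2) * T powr ((c1 - 2) / 2) * (ln T) powr (c2 / 2)\<bar>"
    proof (cases "T \<le> T'")
      case True
      show ?thesis by (rule K) (use x T1 T'1 d True in auto)
    next
      case False
      have "T \<le> 2 * T'" using T1 T'1 d by linarith
      thus ?thesis using K[of x T' T T] x T1 T'1 d False
        by (simp add: norm_minus_commute)
    qed
  qed
qed

end
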